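(* Let $X$ be a one-sided subshift with $\sigma(X)=X$ which is aperiodic and satisfies $|Sp_l(X,\sigma)|<\infty$. Then $(\widetilde{X},\sigma_{\widetilde{X}})$ is a zero-dimensional compact metrizable system in which $\sigma_{\widetilde{X}}$ is an aperiodic surjective local homeomorphism, and moreover: (i) $|Sp_l(\widetilde{X},\sigma_{\widetilde{X}})|=|Sp_l(X,\sigma)|<\infty$; (ii) every point of $Sp_l(\widetilde{X},\sigma_{\widetilde{X}})$ is an isolated point of $\widetilde{X}$.
   Context: $X\subseteq\mathcal{A}^{\mathbb{N}}$ is a closed shift-invariant set over a finite alphabet $\mathcal{A}$, $\sigma$ the left shift. Aperiodic: no point $x$ with $\sigma^n(x)=x$ for some $n\ge1$. For a map $T$ on $Y$, $Sp_l(Y,T)=\{y: |T^{-1}(\{y\})|\ge2\}$. The cover: for $x\in X$, $l\ge0$, $P_l(x)=\{\mu\in\mathcal{L}(X): |\mu|=l,\ \mu x\in X\}$. Let $\mathcal{I}=\{(k,l)\in\mathbb{N}^2: k\le l\}$ with $(k,l)\preceq(k',l')$ iff $k\le k'$ and $l-k\le l'-k'$. For $(k,l)\in\mathcal{I}$, $x\overset{k,l}{\sim}y$ iff $x_{[0,k)}=y_{[0,k)}$ and $P_l(\sigma^k(x))=P_l(\sigma^k(y))$; ${}_kX_l=X/\overset{k,l}{\sim}$ (finite, discrete), classes ${}_k[x]_l$. $\widetilde{X}$ is the projective limit of $({}_kX_l)$ under the maps ${}_{k'}[x]_{l'}\mapsto{}_k[x]_l$ for $(k,l)\preceq(k',l')$.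 The shift is $\sigma_{\widetilde{X}}(\tilde{x})_{(k,l)}={}_k[\sigma(z)]_l$ for any representative $z$ of $\tilde{x}_{(k+1,l+1)}$. A map is a local homeomorphism if each point has an open neighbourhood on which it restricts to a homeomorphism onto an open set. *)

theory Defs
  imports "HOL-Analysis.Analysis"
begin

definition fullshift_top :: "(nat \<Rightarrow> 'a) topology" where
  "fullshift_top = product_topology (\<lambda>_. discrete_topology UNIV) UNIV"

definition shift :: "(nat \<Rightarrow> 'a) \<Rightarrow> (nat \<Rightarrow> 'a)" where
  "shift x = (\<lambda>i. x (Suc i))"

definition subshift :: "(nat \<Rightarrow> 'a::finite) set \<Rightarrow> bool" where
  "subshift X \<longleftrightarrow> closedin fullshift_top X \<and> shift ` X \<subseteq> X"

definition aperiodic_on :: "'b set \<Rightarrow> ('b \<Rightarrow> 'b) \<Rightarrow> bool" where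
  "aperiodic_on Y T \<longleftrightarrow> (\<forall>y\<in>Y. \<forall>n\<ge>1. (T ^^ n) y \<noteq> y)"

definition Sp_l :: "'b set \<Rightarrow> ('b \<Rightarrow> 'b) \<Rightarrow> 'b set" where
  "Sp_l Y T = {y \<in> Y. \<exists>a\<in>Y. \<exists>b\<in>Y. a \<noteq> b \<and> T a = y \<and> T b = y}"

definition lang :: "(nat \<Rightarrow> 'a) set \<Rightarrow> 'a list set" where
  "lang X = {w. \<exists>x\<in>X. \<exists>n. w = map x [n..<n + length w]}"

definition conc :: "'a list \<Rightarrow> (nat \<Rightarrow> 'a) \<Rightarrow> (nat \<Rightarrow> 'a)" where
  "conc \<mu> x = (\<lambda>i. if i < length \<mu> then \<mu> ! i else x (i - length \<mu>))"

definition P_l :: "(nat \<Rightarrow> 'a) set \<Rightarrow> nat \<Rightarrow> (nat \<Rightarrow> 'a) \<Rightarrow> 'a list set" where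
  "P_l X l x = {\<mu> \<in> lang X. length \<mu> = l \<and> conc \<mu> x \<in> X}"

definition kl_rel :: "(nat \<Rightarrow> 'a) set \<Rightarrow> nat \<Rightarrow> nat \<Rightarrow> (nat \<Rightarrow> 'a) \<Rightarrow> (nat \<Rightarrow> 'a) \<Rightarrow> bool" where
  "kl_rel X k l x y \<longleftrightarrow> (\<forall>i<k. x i = y i) \<and> P_l X l ((shift ^^ k) x) = P_l X l ((shift ^^ k) y)"

definition kcls :: "(nat \<Rightarrow> 'a) set \<Rightarrow> nat \<Rightarrow> nat \<Rightarrow> (nat \<Rightarrow> 'a) \<Rightarrow> (nat \<Rightarrow> 'a) set" where
  "kcls X k l x = {y \<in> X. kl_rel X k l x y}"

definition kXl :: "(nat \<Rightarrow> 'a) set \<Rightarrow> nat \<Rightarrow> nat \<Rightarrow> (nat \<Rightarrow> 'a) set set" where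
  "kXl X k l = kcls X k l ` X"

definition Idx :: "(nat \<times> nat) set" where
  "Idx = {(k, l). k \<le> l}"

definition idx_le :: "nat \<times> nat \<Rightarrow> nat \<times> nat \<Rightarrow> bool" where
  "idx_le p q \<longleftrightarrow> fst p \<le> fst q \<and> snd p - fst p \<le> snd q - fst q"

definition bond :: "(nat \<Rightarrow> 'a) set \<Rightarrow> nat \<times> nat \<Rightarrow> (nat \<Rightarrow> 'a) set \<Rightarrow> (nat \<Rightarrow> 'a) set" where
  "bond X p C = kcls X (fst p) (snd p) (SOME z. z \<in> C)"

definition cover_prod_top :: "(nat \<Rightarrow> 'a) set \<Rightarrow> (nat \<times> nat \<Rightarrow> (nat \<Rightarrow> 'a) set) topology" where
  "cover_prod_top X = product_topology (\<lambda>p. discrete_topology (kXl X (fst p) (snd p))) Idx"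

definition Xtil :: "(nat \<Rightarrow> 'a) set \<Rightarrow> (nat \<times> nat \<Rightarrow> (nat \<Rightarrow> 'a) set) set" where
  "Xtil X = {t \<in> (\<Pi>\<^sub>E p\<in>Idx. kXl X (fst p) (snd p)).
              \<forall>p\<in>Idx. \<forall>q\<in>Idx. idx_le p q \<longrightarrow> t p = bond X p (t q)}"

definition Xtil_top :: "(nat \<Rightarrow> 'a) set \<Rightarrow> (nat \<times> nat \<Rightarrow> (nat \<Rightarrow> 'a) set) topology" where
  "Xtil_top X = subtopology (cover_prod_top X) (Xtil X)"

definition shift_til :: "(nat \<Rightarrow> 'a) set \<Rightarrow> (nat \<times> nat \<Rightarrow> (nat \<Rightarrow> 'a) set) \<Rightarrow> (nat \<times> nat \<Rightarrow> (nat \<Rightarrow> 'a) set)" where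
  "shift_til X t = (\<lambda>p\<in>Idx. kcls X (fst p) (snd p) (shift (SOME z. z \<in> t (Suc (fst p), Suc (snd p)))))"

definition local_homeomorphism :: "'b topology \<Rightarrow> ('b \<Rightarrow> 'b) \<Rightarrow> bool" where
  "local_homeomorphism T f \<longleftrightarrow>
     (\<forall>x\<in>topspace T. \<exists>U. openin T U \<and> x \<in> U \<and> openin T (f ` U) \<and>
        homeomorphic_map (subtopology T U) (subtopology T (f ` U)) f)"

definition isolated_point :: "'b topology \<Rightarrow> 'b \<Rightarrow> bool" where
  "isolated_point T x \<longleftrightarrow> x \<in> topspace T \<and> openin T {x}"

end

theory Submission
  imports Defs
begin

lemma funpow_shift: "(shift ^^ k) x = (\<lambda>i. x (i + k))"
proof (induction k arbitrary: x)
  case 0 then show ?case by simp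
next
  case (Suc k)
  have "(shift ^^ Suc k) x = (shift ^^ k) (shift x)" by (simp only: funpow_Suc_right comp_def)
  also have "\<dots> = (\<lambda>i. shift x (i + k))" by (rule Suc.IH)
  also have "\<dots> = (\<lambda>i. x (i + Suc k))" by (simp add: shift_def)
  finally show ?case .
qed

lemma conc_Nil[simp]: "conc [] x = x"
  by (simp add: conc_def)

lemma conc1_0[simp]: "conc [a] x 0 = a" and conc1_Suc[simp]: "conc [a] x (Suc i) = x i"
  by (simp_all add: conc_def)

lemma shift_conc1[simp]: "shift (conc [a] x) = x"
  by (simp add: shift_def conc_def)

lemma conc1_shift: "conc [x 0] (shift x) = x"
  by (auto simp: shift_def conc_def fun_eq_iff)

lemma conc_append: "conc (\<mu> @ \<nu>) x = conc \<mu> (conc \<nu> x)"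
  by (auto simp: conc_def fun_eq_iff nth_append)

lemma shiftn_conc: "length \<mu> = n \<Longrightarrow> (shift ^^ n) (conc \<mu> x) = x"
  by (auto simp: funpow_shift conc_def fun_eq_iff)

lemma conc_take: "conc (map x [0..<n]) ((shift ^^ n) x) = x"
  by (auto simp: funpow_shift conc_def fun_eq_iff)

lemma conc_last: "conc (\<mu> @ [x k]) ((shift ^^ Suc k) x) = conc \<mu> ((shift ^^ k) x)"
proof -
  have "conc [x k] ((shift ^^ Suc k) x) = (shift ^^ k) x"
    by (auto simp del: funpow.simps simp add: funpow_shift conc_def fun_eq_iff)
  then show ?thesis by (simp add: conc_append)
qed

lemma lang_conc: "conc \<mu> x \<in> X \<Longrightarrow> \<mu> \<in> lang X"
  unfolding lang_def
  by (rule CollectI, rule bexI[of _ "conc \<mu> x"], rule exI[of _ 0]) (auto simp: conc_def intro: nth_equalityI)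

lemma P_l_iff: "\<mu> \<in> P_l X l x \<longleftrightarrow> length \<mu> = l \<and> conc \<mu> x \<in> X"
  by (auto simp: P_l_def lang_conc)

lemma Idx_iff[simp]: "(k, l) \<in> Idx \<longleftrightarrow> k \<le> l"
  by (simp add: Idx_def)

lemma idx_le_iff[simp]: "idx_le (k, l) (k', l') \<longleftrightarrow> k \<le> k' \<and> l - k \<le> l' - k'"
  by (simp add: idx_le_def)

lemma kl_rel_refl: "kl_rel X k l x x" by (simp add: kl_rel_def)
lemma kl_rel_sym: "kl_rel X k l x y \<Longrightarrow> kl_rel X k l y x" by (simp add: kl_rel_def)
lemma kl_rel_trans: "kl_rel X k l x y \<Longrightarrow> kl_rel X k l y z \<Longrightarrow> kl_rel X k l x z" by (simp add: kl_rel_def)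

lemma in_kcls: "y \<in> kcls X k l x \<longleftrightarrow> y \<in> X \<and> kl_rel X k l x y"
  by (simp add: kcls_def)

lemma kcls_self: "x \<in> X \<Longrightarrow> x \<in> kcls X k l x"
  by (simp add: in_kcls kl_rel_refl)

lemma kcls_eq: "y \<in> kcls X k l x \<Longrightarrow> kcls X k l y = kcls X k l x"
  by (auto simp: in_kcls; meson kl_rel_sym kl_rel_trans)

lemma kcls_eqI: "kl_rel X k l x y \<Longrightarrow> kcls X k l x = kcls X k l y"
  by (auto simp: in_kcls; meson kl_rel_sym kl_rel_trans)

definition iota :: "(nat \<Rightarrow> 'a) set \<Rightarrow> (nat \<Rightarrow> 'a) \<Rightarrow> (nat \<times> nat \<Rightarrow> (nat \<Rightarrow> 'a) set)" where
  "iota X x = (\<lambda>p\<in>Idx. kcls X (fst p) (snd p) x)"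

definition letter :: "(nat \<times> nat \<Rightarrow> (nat \<Rightarrow> 'a) set) \<Rightarrow> 'a" where
  "letter t = (SOME w. w \<in> t (1, 1)) 0"

definition Aset :: "(nat \<Rightarrow> 'a) set \<Rightarrow> (nat \<times> nat \<Rightarrow> (nat \<Rightarrow> 'a) set) \<Rightarrow> nat \<Rightarrow> 'a set" where
  "Aset X t k = {a. \<forall>z\<in>t (k, Suc k). conc [a] z \<in> X}"

definition valid :: "(nat \<Rightarrow> 'a) set \<Rightarrow> (nat \<times> nat \<Rightarrow> (nat \<Rightarrow> 'a) set) \<Rightarrow> 'a \<Rightarrow> bool" where
  "valid X t a \<longleftrightarrow> (\<forall>k. a \<in> Aset X t k)"

definition pre :: "(nat \<Rightarrow> 'a) set \<Rightarrow> 'a \<Rightarrow> (nat \<times> nat \<Rightarrow> (nat \<Rightarrow> 'a) set) \<Rightarrow> (nat \<times> nat \<Rightarrow> (nat \<Rightarrow> 'a) set)" where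
  "pre X a t = (\<lambda>p\<in>Idx. kcls X (fst p) (snd p) (conc [a] (SOME z. z \<in> t (fst p - 1, Suc (snd p)))))"

definition ptl :: "(nat \<times> nat \<Rightarrow> (nat \<Rightarrow> 'a) set) \<Rightarrow> nat \<Rightarrow> 'a" where
  "ptl t = (\<lambda>i. (SOME z. z \<in> t (Suc i, Suc i)) i)"

lemma separating_index:
  fixes S :: "(nat \<Rightarrow> 'b) set"
  assumes "finite S"
  shows "\<exists>N. \<forall>x\<in>S. \<forall>y\<in>S. (\<forall>i<N. x i = y i) \<longrightarrow> x = y"
proof -
  define D where "D = {(x, y). x \<in> S \<and> y \<in> S \<and> x \<noteq> y}"
  define f where "f = (\<lambda>(x, y). SOME i. (x :: nat \<Rightarrow> 'b) i \<noteq> y i)"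
  have fD: "finite (f ` D)" unfolding D_def using assms by (auto intro: finite_subset[of _ "S \<times> S"])
  define N where "N = Suc (Max (insert 0 (f ` D)))"
  have "x = y" if "x \<in> S" "y \<in> S" "\<forall>i<N. x i = y i" for x y
  proof (rule ccontr)
    assume ne: "x \<noteq> y"
    then have d: "(x, y) \<in> D" using that by (simp add: D_def)
    have "\<exists>i. x i \<noteq> y i" using ne by auto
    then have "x (SOME i. x i \<noteq> y i) \<noteq> y (SOME i. x i \<noteq> y i)" by (rule someI_ex)
    then have "x (f (x, y)) \<noteq> y (f (x, y))" unfolding f_def by simp
    moreover have "f (x, y) < N" unfolding N_def using d fD by (simp add: le_imp_less_Suc)
    ultimately show False using that(3) by blast
  qed
  then show ?thesis by blast
qed

locale SS =
  fixes X :: "(nat \<Rightarrow> 'a::finite) set"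
  assumes closedX: "closedin fullshift_top X" and surjX: "shift ` X = X"
begin

lemma shift_in: "x \<in> X \<Longrightarrow> shift x \<in> X"
  using surjX by auto

lemma shiftn_in: "x \<in> X \<Longrightarrow> (shift ^^ n) x \<in> X"
  by (induction n) (auto simp: shift_in)

lemma shiftn_surj: "(shift ^^ n) ` X = X"
proof (induction n)
  case 0 then show ?case by simp
next
  case (Suc n)
  have "(shift ^^ Suc n) ` X = (shift ^^ n) ` (shift ` X)"
    by (simp only: funpow_Suc_right image_comp)
  then show ?case using Suc surjX by simp
qed

lemma conc_in_iff: "conc \<mu> x \<in> X \<longleftrightarrow> (\<exists>\<nu>. length \<nu> = n \<and> conc (\<nu> @ \<mu>) x \<in> X)"
proof
  assume "conc \<mu> x \<in> X"
  then obtain w where w: "w \<in> X" "(shift ^^ n) w = conc \<mu> x"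
    using shiftn_surj[of n] by (metis imageE)
  have "conc (map w [0..<n] @ \<mu>) x = w"
    using w(2) conc_take[of w n] by (simp add: conc_append)
  then show "\<exists>\<nu>. length \<nu> = n \<and> conc (\<nu> @ \<mu>) x \<in> X"
    using w(1) by (intro exI[of _ "map w [0..<n]"]) simp
next
  assume "\<exists>\<nu>. length \<nu> = n \<and> conc (\<nu> @ \<mu>) x \<in> X"
  then obtain \<nu> where "length \<nu> = n" "conc (\<nu> @ \<mu>) x \<in> X" by blast
  then show "conc \<mu> x \<in> X"
    by (metis conc_append shiftn_conc shiftn_in)
qed

lemma P_l_mono:
  assumes "P_l X l x = P_l X l y" "l' \<le> l"
  shows "P_l X l' x = P_l X l' y"
proof -
  have *: "\<mu> \<in> P_l X l' z \<longleftrightarrow> length \<mu> = l' \<and> (\<exists>\<nu>. length \<nu> = l - l' \<and> \<nu> @ \<mu> \<in> P_l X l z)" for \<mu> z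
    unfolding P_l_iff conc_in_iff[of \<mu> z "l - l'"] using assms(2) by auto
  show ?thesis
    by (rule set_eqI) (simp only: * assms(1))
qed

lemma kl_rel_l_mono: "kl_rel X k l x y \<Longrightarrow> l' \<le> l \<Longrightarrow> kl_rel X k l' x y"
  unfolding kl_rel_def using P_l_mono by blast

lemma kl_rel_Suc:
  assumes "kl_rel X (Suc k) (Suc l) x y"
  shows "kl_rel X k l x y"
proof -
  have *: "\<mu> \<in> P_l X l ((shift ^^ k) z) \<longleftrightarrow> \<mu> @ [z k] \<in> P_l X (Suc l) ((shift ^^ Suc k) z)" for \<mu> z
    by (simp add: P_l_iff conc_last del: funpow.simps)
  have xy: "x k = y k" "\<forall>i<k. x i = y i" and P: "P_l X (Suc l) ((shift ^^ Suc k) x) = P_l X (Suc l) ((shift ^^ Suc k) y)"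
    using assms by (auto simp: kl_rel_def)
  have "P_l X l ((shift ^^ k) x) = P_l X l ((shift ^^ k) y)"
    by (rule set_eqI) (simp only: * xy(1) P)
  then show ?thesis using xy by (simp add: kl_rel_def)
qed

lemma kl_rel_down: "kl_rel X (k + d) (l + d) x y \<Longrightarrow> kl_rel X k l x y"
proof (induction d)
  case 0 then show ?case by simp
next
  case (Suc d)
  have "kl_rel X (Suc (k + d)) (Suc (l + d)) x y" using Suc.prems by simp
  then show ?case by (rule Suc.IH[OF kl_rel_Suc])
qed

lemma kl_rel_mono:
  assumes "k \<le> k'" "l - k \<le> l' - k'" "k \<le> l" "k' \<le> l'" "kl_rel X k' l' x y"
  shows "kl_rel X k l x y"
proof -
  have "k + (k' - k) = k'" using assms by simp
  moreover have "l + (k' - k) \<le> l'" using assms by linarith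
  ultimately have "kl_rel X (k + (k' - k)) (l + (k' - k)) x y"
    using assms(5) kl_rel_l_mono by metis
  then show ?thesis by (rule kl_rel_down)
qed

lemma kl_rel_shift:
  assumes "kl_rel X (Suc k) (Suc l) x y"
  shows "kl_rel X k l (shift x) (shift y)"
proof -
  have e: "(shift ^^ k) (shift z) = (shift ^^ Suc k) z" for z :: "nat \<Rightarrow> 'a"
    by (simp only: funpow_Suc_right comp_def)
  have P: "P_l X (Suc l) ((shift ^^ Suc k) x) = P_l X (Suc l) ((shift ^^ Suc k) y)"
    and f: "\<forall>i<Suc k. x i = y i"
    using assms by (simp_all add: kl_rel_def)
  have "P_l X l ((shift ^^ k) (shift x)) = P_l X l ((shift ^^ k) (shift y))"
    unfolding e by (rule P_l_mono[OF P]) simp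
  moreover have "\<forall>i<k. shift x i = shift y i"
    using f by (simp add: shift_def)
  ultimately show ?thesis by (simp add: kl_rel_def)
qed

lemma kl_rel_cons:
  assumes "kl_rel X k (Suc l) x y"
  shows "kl_rel X (Suc k) (Suc l) (conc [a] x) (conc [a] y)"
proof -
  have e: "(shift ^^ Suc k) (conc [a] z) = (shift ^^ k) z" for z :: "nat \<Rightarrow> 'a"
    by (simp only: funpow_Suc_right comp_def shift_conc1)
  have "\<forall>i<Suc k. conc [a] x i = conc [a] y i"
    using assms by (auto simp: kl_rel_def less_Suc_eq_0_disj)
  then show ?thesis using assms by (simp add: kl_rel_def e del: funpow.simps)
qed

lemma conc1_class:
  assumes "kl_rel X k l x y" "k < l" "conc [a] x \<in> X"
  shows "conc [a] y \<in> X"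
proof -
  have e: "conc [a] z = conc (a # map z [0..<k]) ((shift ^^ k) z)" for z :: "nat \<Rightarrow> 'a"
    using conc_append[of "[a]" "map z [0..<k]" "(shift ^^ k) z"] by (simp add: conc_take)
  have P: "P_l X (Suc k) ((shift ^^ k) x) = P_l X (Suc k) ((shift ^^ k) y)"
  proof -
    have "P_l X l ((shift ^^ k) x) = P_l X l ((shift ^^ k) y)" using assms(1) by (simp add: kl_rel_def)
    then show ?thesis using P_l_mono assms(2) by (metis Suc_leI)
  qed
  have m: "map x [0..<k] = map y [0..<k]"
    using assms by (auto simp: kl_rel_def)
  have "a # map x [0..<k] \<in> P_l X (Suc k) ((shift ^^ k) x)"
    using assms(3) by (simp add: P_l_iff e[of x])
  then have "a # map y [0..<k] \<in> P_l X (Suc k) ((shift ^^ k) y)"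
    using P m by simp
  then show ?thesis by (simp add: P_l_iff e[of y])
qed

lemma Xtil_PiE: "t \<in> Xtil X \<Longrightarrow> t \<in> (\<Pi>\<^sub>E p\<in>Idx. kXl X (fst p) (snd p))"
  by (simp add: Xtil_def)

lemma Xtil_bond: "t \<in> Xtil X \<Longrightarrow> p \<in> Idx \<Longrightarrow> q \<in> Idx \<Longrightarrow> idx_le p q \<Longrightarrow> t p = bond X p (t q)"
  by (simp add: Xtil_def)

lemma Xtil_undef: "t \<in> Xtil X \<Longrightarrow> p \<notin> Idx \<Longrightarrow> t p = undefined"
  using Xtil_PiE by (meson PiE_arb)

lemma Xtil_val:
  assumes "t \<in> Xtil X" "k \<le> l"
  obtains z where "z \<in> X" "t (k, l) = kcls X k l z"
proof -
  have "(k, l) \<in> Idx" using assms(2) by simp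
  then have "t (k, l) \<in> kXl X k l" using PiE_mem[OF Xtil_PiE[OF assms(1)]] by fastforce
  then obtain z where "z \<in> X" "t (k, l) = kcls X k l z" unfolding kXl_def by blast
  then show ?thesis by (rule that)
qed

lemma Xtil_rep:
  assumes "t \<in> Xtil X" "k \<le> l" "z \<in> t (k, l)"
  shows "z \<in> X" "t (k, l) = kcls X k l z"
proof -
  obtain z0 where "z0 \<in> X" "t (k, l) = kcls X k l z0" using Xtil_val assms by blast
  then have "z \<in> kcls X k l z0" using assms(3) by simp
  then show "z \<in> X" "t (k, l) = kcls X k l z" using kcls_eq[of z X k l z0] \<open>t (k, l) = kcls X k l z0\<close> by (auto simp: in_kcls)
qed

lemma Xtil_ne:
  assumes "t \<in> Xtil X" "k \<le> l"
  shows "\<exists>z. z \<in> t (k, l)"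
proof -
  obtain z0 where "z0 \<in> X" "t (k, l) = kcls X k l z0" using Xtil_val assms by blast
  then show ?thesis using kcls_self by metis
qed

lemma bond_kcls:
  assumes "x \<in> X" "k \<le> k'" "l - k \<le> l' - k'" "k \<le> l" "k' \<le> l'"
  shows "bond X (k, l) (kcls X k' l' x) = kcls X k l x"
proof -
  define z where "z = (SOME z. z \<in> kcls X k' l' x)"
  have "z \<in> kcls X k' l' x" unfolding z_def some_in_eq using kcls_self[OF assms(1)] by blast
  then have "kl_rel X k' l' x z" by (simp add: in_kcls)
  then have "kl_rel X k l x z" using kl_rel_mono assms by blast
  then have "kcls X k l x = kcls X k l z" by (rule kcls_eqI)
  then show ?thesis unfolding bond_def z_def by simp
qed

lemma Xtil_coh:
  assumes "t \<in> Xtil X" "k \<le> k'" "l - k \<le> l' - k'" "k \<le> l" "k' \<le> l'" "z \<in> t (k', l')"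
  shows "t (k, l) = kcls X k l z" "z \<in> t (k, l)"
proof -
  have "t (k, l) = bond X (k, l) (t (k', l'))" using Xtil_bond assms by simp
  also have "\<dots> = kcls X k l z" using Xtil_rep[OF assms(1) assms(5) assms(6)] bond_kcls assms by simp
  finally show "t (k, l) = kcls X k l z" .
  then show "z \<in> t (k, l)" using Xtil_rep[OF assms(1) assms(5) assms(6)] kcls_self by simp
qed

lemma shift_til_val:
  assumes "t \<in> Xtil X" "k \<le> l" "z \<in> t (Suc k, Suc l)"
  shows "shift_til X t (k, l) = kcls X k l (shift z)"
proof -
  define z' where "z' = (SOME z. z \<in> t (Suc k, Suc l))"
  have z': "z' \<in> t (Suc k, Suc l)" unfolding z'_def some_in_eq using assms(3) by blast
  have "t (Suc k, Suc l) = kcls X (Suc k) (Suc l) z" using Xtil_rep assms by simp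
  then have "kl_rel X (Suc k) (Suc l) z z'" using z' by (simp add: in_kcls)
  then have "kl_rel X k l (shift z') (shift z)" by (rule kl_rel_shift[OF kl_rel_sym])
  then have "kcls X k l (shift z') = kcls X k l (shift z)" by (rule kcls_eqI)
  then show ?thesis using assms(2) unfolding shift_til_def z'_def by simp
qed

lemma shift_til_undef: "p \<notin> Idx \<Longrightarrow> shift_til X t p = undefined"
  by (simp add: shift_til_def)

lemma shift_til_in:
  assumes t: "t \<in> Xtil X"
  shows "shift_til X t \<in> Xtil X"
proof -
  have val: "shift_til X t (k, l) \<in> kXl X k l" if kl: "k \<le> l" for k l
  proof -
    obtain z where z: "z \<in> t (Suc k, Suc l)" using Xtil_ne[OF t, of "Suc k" "Suc l"] kl by auto
    then have "z \<in> X" using Xtil_rep[OF t _ z] kl by simp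
    then show ?thesis using shift_til_val[OF t kl z] shift_in by (simp add: kXl_def)
  qed
  have "shift_til X t \<in> (\<Pi>\<^sub>E p\<in>Idx. kXl X (fst p) (snd p))"
    using val by (auto simp: PiE_iff shift_til_def extensional_def Idx_def)
  moreover have "shift_til X t (k, l) = bond X (k, l) (shift_til X t (k', l'))"
    if h: "k \<le> k'" "l - k \<le> l' - k'" "k \<le> l" "k' \<le> l'" for k l k' l'
  proof -
    obtain z where z: "z \<in> t (Suc k', Suc l')" using Xtil_ne[OF t, of "Suc k'" "Suc l'"] h by auto
    have zX: "z \<in> X" using Xtil_rep[OF t _ z] h by simp
    have z2: "z \<in> t (Suc k, Suc l)" using Xtil_coh(2)[OF t _ _ _ _ z] h by simp
    show ?thesis
      using shift_til_val[OF t h(4) z] shift_til_val[OF t h(3) z2] bond_kcls[OF shift_in[OF zX] h] by simp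
  qed
  ultimately show ?thesis unfolding Xtil_def by auto
qed

lemma iota_in: "x \<in> X \<Longrightarrow> iota X x \<in> Xtil X"
  by (auto simp: Xtil_def iota_def kXl_def PiE_iff bond_kcls)

lemma iota_inj:
  assumes "x \<in> X" "y \<in> X" "iota X x = iota X y"
  shows "x = y"
proof
  fix i
  have "kcls X (Suc i) (Suc i) x = kcls X (Suc i) (Suc i) y"
    using fun_cong[OF assms(3), of "(Suc i, Suc i)"] by (simp add: iota_def)
  then have "y \<in> kcls X (Suc i) (Suc i) x" using kcls_self[OF assms(2)] by simp
  then show "x i = y i" by (simp add: in_kcls kl_rel_def)
qed

lemma shift_til_iota:
  assumes "x \<in> X"
  shows "shift_til X (iota X x) = iota X (shift x)"
proof
  fix p :: "nat \<times> nat"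
  obtain k l where p: "p = (k, l)" by fastforce
  show "shift_til X (iota X x) p = iota X (shift x) p"
  proof (cases "k \<le> l")
    case True
    have "x \<in> iota X x (Suc k, Suc l)" using True kcls_self[OF assms] by (simp add: iota_def)
    then show ?thesis using shift_til_val[OF iota_in[OF assms] True] True p by (simp add: iota_def)
  next
    case False
    then show ?thesis using p by (simp add: iota_def shift_til_def)
  qed
qed

lemma Aset_iff:
  assumes "t \<in> Xtil X" "z \<in> t (k, Suc k)"
  shows "a \<in> Aset X t k \<longleftrightarrow> conc [a] z \<in> X"
proof -
  have "t (k, Suc k) = kcls X k (Suc k) z" using Xtil_rep assms by simp
  then have "kl_rel X k (Suc k) z z'" "kl_rel X k (Suc k) z' z" if "z' \<in> t (k, Suc k)" for z'
    using that by (auto simp: in_kcls dest: kl_rel_sym)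
  then show ?thesis using assms(2) conc1_class unfolding Aset_def by blast
qed

lemma Aset_ne:
  assumes "t \<in> Xtil X"
  shows "Aset X t k \<noteq> {}"
proof -
  obtain z where z: "z \<in> t (k, Suc k)" using Xtil_ne[OF assms, of k "Suc k"] by auto
  have "z \<in> X" using Xtil_rep(1)[OF assms _ z] by simp
  then obtain w where w: "w \<in> X" "z = shift w" using surjX by blast
  then have "w 0 \<in> Aset X t k" using Aset_iff[OF assms z] conc1_shift by metis
  then show ?thesis by blast
qed

lemma Aset_Suc:
  assumes "t \<in> Xtil X"
  shows "Aset X t (Suc k) \<subseteq> Aset X t k"
proof
  fix a assume a: "a \<in> Aset X t (Suc k)"
  obtain z where z: "z \<in> t (Suc k, Suc (Suc k))" using Xtil_ne[OF assms, of "Suc k" "Suc (Suc k)"] by auto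
  have z2: "z \<in> t (k, Suc k)" using Xtil_coh(2)[OF assms _ _ _ _ z] by simp
  show "a \<in> Aset X t k" using a Aset_iff[OF assms z] Aset_iff[OF assms z2] by simp
qed

lemma Aset_antimono:
  assumes "t \<in> Xtil X" "k \<le> k'"
  shows "Aset X t k' \<subseteq> Aset X t k"
  using lift_Suc_antimono_le[of "Aset X t", OF Aset_Suc[OF assms(1)] assms(2)] .

lemma valid_ex:
  assumes "t \<in> Xtil X"
  shows "\<exists>a. valid X t a"
proof (rule ccontr)
  assume "\<not> (\<exists>a. valid X t a)"
  then have "\<forall>a. \<exists>k. a \<notin> Aset X t k" by (simp add: valid_def)
  then obtain K where K: "\<And>a. a \<notin> Aset X t (K a)" by metis
  define M where "M = Max (range K)"
  have "K a \<le> M" for a unfolding M_def by simp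
  then have "a \<notin> Aset X t M" for a using K Aset_antimono[OF assms] by blast
  then show False using Aset_ne[OF assms, of M] by blast
qed

lemma letter_val:
  assumes "s \<in> Xtil X" "Suc k \<le> l" "w \<in> s (Suc k, l)"
  shows "w 0 = letter s"
proof -
  have w1: "w \<in> s (1, 1)" using Xtil_coh(2)[OF assms(1) _ _ _ _ assms(3)] assms(2) by simp
  define w' where "w' = (SOME w. w \<in> s (1, 1))"
  have "w' \<in> s (1, 1)" unfolding w'_def some_in_eq using w1 by blast
  then have "kl_rel X 1 1 w w'" using Xtil_rep[OF assms(1) _ w1] by (simp add: in_kcls)
  then show ?thesis unfolding letter_def w'_def by (simp add: kl_rel_def)
qed

lemma preimage_valid:
  assumes s: "s \<in> Xtil X"
  shows "valid X (shift_til X s) (letter s)"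
  unfolding valid_def
proof
  fix k
  obtain w where w: "w \<in> s (Suc k, Suc (Suc k))" using Xtil_ne[OF s, of "Suc k" "Suc (Suc k)"] by auto
  have wX: "w \<in> X" using Xtil_rep(1)[OF s _ w] by simp
  have "shift_til X s (k, Suc k) = kcls X k (Suc k) (shift w)" using shift_til_val[OF s _ w] by simp
  then have sw: "shift w \<in> shift_til X s (k, Suc k)" using kcls_self[OF shift_in[OF wX]] by simp
  have "conc [letter s] (shift w) \<in> X" using letter_val[OF s _ w] conc1_shift[of w] wX by simp
  then show "letter s \<in> Aset X (shift_til X s) k" using Aset_iff[OF shift_til_in[OF s] sw] by simp
qed

lemma preimage_unique:
  assumes s: "s \<in> Xtil X" and s': "s' \<in> Xtil X"
    and eq: "shift_til X s = shift_til X s'" and le: "letter s = letter s'"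
  shows "s = s'"
proof
  fix p :: "nat \<times> nat"
  obtain k l where p: "p = (k, l)" by fastforce
  show "s p = s' p"
  proof (cases "k \<le> l")
    case False
    then have "(k, l) \<notin> Idx" by simp
    then show ?thesis using Xtil_undef[OF s] Xtil_undef[OF s'] p by simp
  next
    case True
    obtain w where w: "w \<in> s (Suc k, Suc (Suc l))" using Xtil_ne[OF s, of "Suc k" "Suc (Suc l)"] True by auto
    obtain w' where w': "w' \<in> s' (Suc k, Suc (Suc l))" using Xtil_ne[OF s', of "Suc k" "Suc (Suc l)"] True by auto
    have wX: "w \<in> X" using Xtil_rep(1)[OF s _ w] True by simp
    have w'X: "w' \<in> X" using Xtil_rep(1)[OF s' _ w'] True by simp
    have "kcls X k (Suc l) (shift w) = kcls X k (Suc l) (shift w')"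
      using shift_til_val[OF s _ w] shift_til_val[OF s' _ w'] eq True by simp
    then have "shift w \<in> kcls X k (Suc l) (shift w')" using kcls_self shift_in wX by metis
    then have r: "kl_rel X k (Suc l) (shift w') (shift w)" by (simp add: in_kcls)
    have "w 0 = w' 0" using letter_val[OF s _ w] letter_val[OF s' _ w'] le True by simp
    then have "kl_rel X (Suc k) (Suc l) w' w" using kl_rel_cons[OF r, of "w 0"] conc1_shift by metis
    then have "kl_rel X k l w' w" by (rule kl_rel_Suc)
    moreover have "s (k, l) = kcls X k l w" using Xtil_coh(1)[OF s _ _ _ _ w] True by simp
    moreover have "s' (k, l) = kcls X k l w'" using Xtil_coh(1)[OF s' _ _ _ _ w'] True by simp
    ultimately show ?thesis using p by (simp add: kcls_eqI)
  qed
qed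

lemma pre_val:
  assumes t: "t \<in> Xtil X" and va: "valid X t a" and kl: "k \<le> l" and z: "z \<in> t (k - 1, Suc l)"
  shows "pre X a t (k, l) = kcls X k l (conc [a] z)" "conc [a] z \<in> X"
proof -
  have z1: "z \<in> t (k - 1, Suc (k - 1))" using Xtil_coh(2)[OF t _ _ _ _ z] kl by simp
  show az: "conc [a] z \<in> X" using Aset_iff[OF t z1] va unfolding valid_def by blast
  define z' where "z' = (SOME z. z \<in> t (k - 1, Suc l))"
  have z': "z' \<in> t (k - 1, Suc l)" unfolding z'_def some_in_eq using z by blast
  have "kl_rel X (k - 1) (Suc l) z' z" using Xtil_rep[OF t _ z'] z kl by (simp add: in_kcls)
  then have "kl_rel X (Suc (k - 1)) (Suc l) (conc [a] z') (conc [a] z)" by (rule kl_rel_cons)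
  moreover have "k \<le> Suc (k - 1)" "l - k \<le> Suc l - Suc (k - 1)" "Suc (k - 1) \<le> Suc l"
    using kl by arith+
  ultimately have "kl_rel X k l (conc [a] z') (conc [a] z)" using kl_rel_mono kl by blast
  then show "pre X a t (k, l) = kcls X k l (conc [a] z)"
    using kl kcls_eqI[of X k l "conc [a] z'" "conc [a] z"] unfolding pre_def z'_def by simp
qed

lemma pre_in:
  assumes t: "t \<in> Xtil X" and va: "valid X t a"
  shows "pre X a t \<in> Xtil X"
proof -
  have val: "pre X a t (k, l) \<in> kXl X k l" if kl: "k \<le> l" for k l
  proof -
    have "k - 1 \<le> Suc l" using kl by arith
    then obtain z where z: "z \<in> t (k - 1, Suc l)" using Xtil_ne[OF t, of "k - 1" "Suc l"] by auto
    show ?thesis using pre_val[OF t va kl z] by (simp add: kXl_def)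
  qed
  have "pre X a t \<in> (\<Pi>\<^sub>E p\<in>Idx. kXl X (fst p) (snd p))"
    using val by (auto simp: PiE_iff pre_def extensional_def Idx_def)
  moreover have "pre X a t (k, l) = bond X (k, l) (pre X a t (k', l'))"
    if h: "k \<le> k'" "l - k \<le> l' - k'" "k \<le> l" "k' \<le> l'" for k l k' l'
  proof -
    have "k' - 1 \<le> Suc l'" using h by arith
    then obtain z where z: "z \<in> t (k' - 1, Suc l')" using Xtil_ne[OF t, of "k' - 1" "Suc l'"] by auto
    have c: "k - 1 \<le> k' - 1" "Suc l - (k - 1) \<le> Suc l' - (k' - 1)" "k - 1 \<le> Suc l" "k' - 1 \<le> Suc l'"
      using h by arith+
    have z2: "z \<in> t (k - 1, Suc l)" using Xtil_coh(2)[OF t c z] .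
    show ?thesis
      using pre_val[OF t va h(4) z] pre_val[OF t va h(3) z2] bond_kcls[OF _ h] by simp
  qed
  ultimately show ?thesis unfolding Xtil_def by auto
qed

lemma shift_pre:
  assumes t: "t \<in> Xtil X" and va: "valid X t a"
  shows "shift_til X (pre X a t) = t"
proof
  fix p :: "nat \<times> nat"
  obtain k l where p: "p = (k, l)" by fastforce
  show "shift_til X (pre X a t) p = t p"
  proof (cases "k \<le> l")
    case False
    then have "(k, l) \<notin> Idx" by simp
    then show ?thesis using Xtil_undef[OF t] shift_til_undef p by simp
  next
    case True
    obtain z where z: "z \<in> t (k, Suc (Suc l))" using Xtil_ne[OF t, of k "Suc (Suc l)"] True by auto
    have z': "z \<in> t (Suc k - 1, Suc (Suc l))" using z by simp
    have pv: "pre X a t (Suc k, Suc l) = kcls X (Suc k) (Suc l) (conc [a] z)" "conc [a] z \<in> X"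
      using pre_val[OF t va _ z'] True by auto
    then have "conc [a] z \<in> pre X a t (Suc k, Suc l)" using kcls_self by simp
    then have "shift_til X (pre X a t) (k, l) = kcls X k l z"
      using shift_til_val[OF pre_in[OF t va] True] by simp
    moreover have "t (k, l) = kcls X k l z" using Xtil_coh(1)[OF t _ _ _ _ z] True by simp
    ultimately show ?thesis using p by simp
  qed
qed

lemma letter_pre:
  assumes t: "t \<in> Xtil X" and va: "valid X t a"
  shows "letter (pre X a t) = a"
proof -
  obtain z where z: "z \<in> t (1 - 1, Suc 1)" using Xtil_ne[OF t, of 0 "Suc 1"] by auto
  have pv: "pre X a t (1, 1) = kcls X 1 1 (conc [a] z)" "conc [a] z \<in> X"
    using pre_val[OF t va _ z] by auto
  then have "conc [a] z \<in> pre X a t (Suc 0, 1)" using kcls_self by simp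
  from letter_val[OF pre_in[OF t va] _ this] show ?thesis by simp
qed

lemma shift_til_surj: "shift_til X ` Xtil X = Xtil X"
proof
  show "shift_til X ` Xtil X \<subseteq> Xtil X" using shift_til_in by blast
  show "Xtil X \<subseteq> shift_til X ` Xtil X"
  proof
    fix t assume t: "t \<in> Xtil X"
    obtain a where "valid X t a" using valid_ex[OF t] by blast
    then show "t \<in> shift_til X ` Xtil X" using shift_pre pre_in t by (metis imageI)
  qed
qed

lemma ptl_val:
  assumes t: "t \<in> Xtil X" and h: "i < k" "k \<le> l" and z: "z \<in> t (k, l)"
  shows "z i = ptl t i"
proof -
  have z1: "z \<in> t (Suc i, Suc i)" using Xtil_coh(2)[OF t _ _ _ _ z] h by simp
  define z' where "z' = (SOME z. z \<in> t (Suc i, Suc i))"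
  have "z' \<in> t (Suc i, Suc i)" unfolding z'_def some_in_eq using z1 by blast
  then have "kl_rel X (Suc i) (Suc i) z z'" using Xtil_rep[OF t _ z1] by (simp add: in_kcls)
  then have "z i = z' i" by (simp add: kl_rel_def)
  then show ?thesis by (simp add: ptl_def z'_def)
qed

lemma ptl_in:
  assumes t: "t \<in> Xtil X"
  shows "ptl t \<in> X"
proof (rule ccontr)
  assume nin: "ptl t \<notin> X"
  have top: "topspace (fullshift_top :: (nat \<Rightarrow> 'a) topology) = UNIV"
    by (simp add: fullshift_top_def)
  have "openin fullshift_top (UNIV - X)" using closedX top by (metis closedin_def)
  then obtain U where U: "finite {i. U i \<noteq> UNIV}" "ptl t \<in> Pi\<^sub>E UNIV U" "Pi\<^sub>E UNIV U \<subseteq> UNIV - X"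
    using nin unfolding fullshift_top_def openin_product_topology_alt by fastforce
  define N where "N = Suc (Max (insert 0 {i. U i \<noteq> UNIV}))"
  obtain z where z: "z \<in> t (N, N)" using Xtil_ne[OF t, of N N] by auto
  have zX: "z \<in> X" using Xtil_rep(1)[OF t _ z] by simp
  have "z \<in> Pi\<^sub>E UNIV U"
  proof -
    have "z i \<in> U i" for i
    proof (cases "U i = UNIV")
      case False
      then have "i < N" unfolding N_def using U(1) by (simp add: le_imp_less_Suc)
      then have "z i = ptl t i" using ptl_val[OF t _ _ z] by simp
      then show ?thesis using U(2) by auto
    qed simp
    then show ?thesis by auto
  qed
  then show False using U(3) zX by blast
qed

lemma ptl_shift:
  assumes t: "t \<in> Xtil X"
  shows "ptl (shift_til X t) = shift (ptl t)"
proof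
  fix i
  obtain z where z: "z \<in> t (Suc (Suc i), Suc (Suc i))" using Xtil_ne[OF t, of "Suc (Suc i)" "Suc (Suc i)"] by auto
  have zX: "z \<in> X" using Xtil_rep(1)[OF t _ z] by simp
  have "shift_til X t (Suc i, Suc i) = kcls X (Suc i) (Suc i) (shift z)" using shift_til_val[OF t _ z] by simp
  then have sz: "shift z \<in> shift_til X t (Suc i, Suc i)" using kcls_self[OF shift_in[OF zX]] by simp
  have "shift z i = ptl (shift_til X t) i" using ptl_val[OF shift_til_in[OF t] _ _ sz] by simp
  moreover have "z (Suc i) = ptl t (Suc i)" using ptl_val[OF t _ _ z] by simp
  ultimately show "ptl (shift_til X t) i = shift (ptl t) i" by (simp add: shift_def)
qed

lemma ptl_funpow:
  assumes t: "t \<in> Xtil X"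
  shows "(shift_til X ^^ n) t \<in> Xtil X \<and> ptl ((shift_til X ^^ n) t) = (shift ^^ n) (ptl t)"
proof (induction n)
  case 0 then show ?case using t by simp
next
  case (Suc n)
  then show ?case using shift_til_in ptl_shift by simp
qed

lemma aperiodic_til:
  assumes "aperiodic_on X shift"
  shows "aperiodic_on (Xtil X) (shift_til X)"
  unfolding aperiodic_on_def
proof (intro ballI allI impI)
  fix t n assume t: "t \<in> Xtil X" and n: "(1::nat) \<le> n"
  show "(shift_til X ^^ n) t \<noteq> t"
  proof
    assume "(shift_til X ^^ n) t = t"
    then have "(shift ^^ n) (ptl t) = ptl t" using ptl_funpow[OF t, of n] by simp
    then show False using assms ptl_in[OF t] n unfolding aperiodic_on_def by blast
  qed
qed

lemma twovalid_Sp: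
  assumes t: "t \<in> Xtil X" and va: "valid X t a" and vb: "valid X t b" and ab: "a \<noteq> b"
    and z: "z \<in> t (k, Suc k)"
  shows "z \<in> Sp_l X shift"
proof -
  have zX: "z \<in> X" using Xtil_rep(1)[OF t _ z] by simp
  have c: "conc [a] z \<in> X" "conc [b] z \<in> X"
    using Aset_iff[OF t z] va vb unfolding valid_def by blast+
  have ne: "conc [a] z \<noteq> conc [b] z"
  proof
    assume "conc [a] z = conc [b] z"
    then have "conc [a] z 0 = conc [b] z 0" by simp
    then show False using ab by simp
  qed
  show ?thesis unfolding Sp_l_def using zX c ne shift_conc1[of a z] shift_conc1[of b z] by blast
qed

lemma twovalid_single:
  assumes fin: "finite (Sp_l X shift)"
    and t: "t \<in> Xtil X" and va: "valid X t a" and vb: "valid X t b" and ab: "a \<noteq> b"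
  shows "\<exists>N x. t (N, Suc N) = {x}"
proof -
  obtain N where N: "\<And>x y. x \<in> Sp_l X shift \<Longrightarrow> y \<in> Sp_l X shift \<Longrightarrow> (\<forall>i<N. x i = y i) \<Longrightarrow> x = y"
    using separating_index[OF fin] by blast
  obtain x where x: "x \<in> t (N, Suc N)" using Xtil_ne[OF t, of N "Suc N"] by auto
  have "y = x" if y: "y \<in> t (N, Suc N)" for y
  proof -
    have "t (N, Suc N) = kcls X N (Suc N) x" using Xtil_rep(2)[OF t _ x] by simp
    then have "kl_rel X N (Suc N) x y" using y by (simp add: in_kcls)
    then have "\<forall>i<N. y i = x i" by (simp add: kl_rel_def)
    then show "y = x" using N twovalid_Sp[OF t va vb ab] x y by blast
  qed
  then have "t (N, Suc N) = {x}" using x by blast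
  then show ?thesis by blast
qed

lemma single_eq:
  assumes t: "t \<in> Xtil X" and t': "t' \<in> Xtil X"
    and e: "t (N, Suc N) = {x}" "t' (N, Suc N) = {x}"
  shows "t = t'"
proof
  fix p :: "nat \<times> nat"
  obtain k l where p: "p = (k, l)" by fastforce
  show "t p = t' p"
  proof (cases "k \<le> l")
    case False
    then have "(k, l) \<notin> Idx" by simp
    then show ?thesis using Xtil_undef[OF t] Xtil_undef[OF t'] p by simp
  next
    case True
    have c: "N \<le> k + N" "Suc N - N \<le> (l + N + 1) - (k + N)" "N \<le> Suc N" "k + N \<le> l + N + 1"
      using True by arith+
    have c2: "k \<le> k + N" "l - k \<le> (l + N + 1) - (k + N)" "k \<le> l" "k + N \<le> l + N + 1"
      using True by arith+
    have key: "s (k, l) = kcls X k l x" if s: "s \<in> Xtil X" "s (N, Suc N) = {x}" for s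
    proof -
      obtain z where z: "z \<in> s (k + N, l + N + 1)" using Xtil_ne[OF s(1), of "k + N" "l + N + 1"] True by auto
      have "z \<in> s (N, Suc N)" using Xtil_coh(2)[OF s(1) c z] .
      then have "z = x" using s(2) by simp
      then show ?thesis using Xtil_coh(1)[OF s(1) c2 z] by simp
    qed
    show ?thesis using key[OF t e(1)] key[OF t' e(2)] p by simp
  qed
qed

lemma Sp_til_char:
  assumes fin: "finite (Sp_l X shift)" and t: "t \<in> Sp_l (Xtil X) (shift_til X)"
  shows "\<exists>x\<in>Sp_l X shift. t = iota X x \<and> (\<exists>N. t (N, Suc N) = {x})"
proof -
  obtain s1 s2 where s: "t \<in> Xtil X" "s1 \<in> Xtil X" "s2 \<in> Xtil X" "s1 \<noteq> s2"
    "shift_til X s1 = t" "shift_til X s2 = t"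
    using t unfolding Sp_l_def by blast
  have ab: "letter s1 \<noteq> letter s2"
  proof
    assume "letter s1 = letter s2"
    then have "s1 = s2" using preimage_unique[OF s(2) s(3)] s(5,6) by simp
    then show False using s(4) by simp
  qed
  have va: "valid X t (letter s1)" "valid X t (letter s2)"
    using preimage_valid[OF s(2)] preimage_valid[OF s(3)] s(5,6) by simp_all
  obtain N x where Nx: "t (N, Suc N) = {x}" using twovalid_single[OF fin s(1) va ab] by blast
  have xin: "x \<in> t (N, Suc N)" using Nx by simp
  have xX: "x \<in> X" using Xtil_rep(1)[OF s(1) _ xin] by simp
  have "iota X x (N, Suc N) = t (N, Suc N)" using Xtil_rep(2)[OF s(1) _ xin] by (simp add: iota_def)
  then have e2: "iota X x (N, Suc N) = {x}" using Nx by simp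
  have "t = iota X x" using single_eq[OF s(1) iota_in[OF xX] Nx e2] .
  moreover have "x \<in> Sp_l X shift" using twovalid_Sp[OF s(1) va ab xin] .
  ultimately show ?thesis using Nx by blast
qed

lemma iota_Sp:
  assumes x: "x \<in> Sp_l X shift"
  shows "iota X x \<in> Sp_l (Xtil X) (shift_til X)"
proof -
  obtain u v where uv: "x \<in> X" "u \<in> X" "v \<in> X" "u \<noteq> v" "shift u = x" "shift v = x"
    using x unfolding Sp_l_def by blast
  have "iota X u \<noteq> iota X v" using iota_inj uv by blast
  moreover have "shift_til X (iota X u) = iota X x" "shift_til X (iota X v) = iota X x"
    using shift_til_iota uv by auto
  ultimately show ?thesis unfolding Sp_l_def using iota_in uv by blast
qed

lemma Sp_til_eq:
  assumes fin: "finite (Sp_l X shift)"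
  shows "Sp_l (Xtil X) (shift_til X) = iota X ` Sp_l X shift"
  using Sp_til_char[OF fin] iota_Sp by blast

lemma Sp_til_card:
  assumes fin: "finite (Sp_l X shift)"
  shows "finite (Sp_l (Xtil X) (shift_til X)) \<and> card (Sp_l (Xtil X) (shift_til X)) = card (Sp_l X shift)"
proof -
  have "inj_on (iota X) (Sp_l X shift)"
    by (rule inj_onI) (use iota_inj in \<open>auto simp: Sp_l_def\<close>)
  then show ?thesis using Sp_til_eq[OF fin] fin by (simp add: card_image)
qed

lemma topspace_Xtil: "topspace (Xtil_top X) = Xtil X"
  unfolding Xtil_top_def cover_prod_top_def using Xtil_PiE by auto

lemma Xtil_in_kXl: "t \<in> Xtil X \<Longrightarrow> k \<le> l \<Longrightarrow> t (k, l) \<in> kXl X k l"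
  using PiE_mem[OF Xtil_PiE, of t "(k, l)"] by simp

lemma proj_cont: "k \<le> l \<Longrightarrow> continuous_map (Xtil_top X) (discrete_topology (kXl X k l)) (\<lambda>t. t (k, l))"
  unfolding Xtil_top_def cover_prod_top_def
  using continuous_map_from_subtopology[OF continuous_map_product_projection[of "(k, l)" Idx "\<lambda>p. discrete_topology (kXl X (fst p) (snd p))"]]
  by simp

lemma cyl_open: "k \<le> l \<Longrightarrow> openin (Xtil_top X) {t \<in> Xtil X. P (t (k, l))}"
proof -
  assume kl: "k \<le> l"
  have "openin (Xtil_top X) {t \<in> topspace (Xtil_top X). t (k, l) \<in> {C \<in> kXl X k l. P C}}"
    by (rule openin_continuous_map_preimage[OF proj_cont[OF kl]]) auto
  moreover have "{t \<in> topspace (Xtil_top X). t (k, l) \<in> {C \<in> kXl X k l. P C}} = {t \<in> Xtil X. P (t (k, l))}"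
    using topspace_Xtil Xtil_in_kXl kl by auto
  ultimately show ?thesis by simp
qed

lemma cyl_closed: "k \<le> l \<Longrightarrow> closedin (Xtil_top X) {t \<in> Xtil X. P (t (k, l))}"
proof -
  assume kl: "k \<le> l"
  have "closedin (Xtil_top X) {t \<in> topspace (Xtil_top X). t (k, l) \<in> {C \<in> kXl X k l. P C}}"
    by (rule closedin_continuous_map_preimage[OF proj_cont[OF kl]]) auto
  moreover have "{t \<in> topspace (Xtil_top X). t (k, l) \<in> {C \<in> kXl X k l. P C}} = {t \<in> Xtil X. P (t (k, l))}"
    using topspace_Xtil Xtil_in_kXl kl by auto
  ultimately show ?thesis by simp
qed

lemma kXl_finite: "finite (kXl X k l)"
proof -
  define F where "F = (\<lambda>(w, P). {y \<in> X. map y [0..<k] = w \<and> P_l X l ((shift ^^ k) y) = P})"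
  have "kcls X k l x = F (map x [0..<k], P_l X l ((shift ^^ k) x))" for x
    unfolding F_def kcls_def kl_rel_def by (auto simp: map_eq_conv)
  moreover have "P_l X l z \<subseteq> {\<mu>. set \<mu> \<subseteq> UNIV \<and> length \<mu> = l}" for z
    by (auto simp: P_l_iff)
  ultimately have "kXl X k l \<subseteq> F ` ({w. set w \<subseteq> (UNIV :: 'a set) \<and> length w = k} \<times> Pow {\<mu>. set \<mu> \<subseteq> (UNIV :: 'a set) \<and> length \<mu> = l})"
    unfolding kXl_def by auto
  moreover have "finite ({w. set w \<subseteq> (UNIV :: 'a set) \<and> length w = k} \<times> Pow {\<mu>. set \<mu> \<subseteq> (UNIV :: 'a set) \<and> length \<mu> = l})"
    by (intro finite_cartesian_product finite_lists_length_eq iffD2[OF finite_Pow_iff]) simp_all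
  ultimately show ?thesis by (meson finite_imageI finite_subset)
qed

lemma bond_into:
  assumes "k \<le> k'" "l - k \<le> l' - k'" "k \<le> l" "k' \<le> l'" "C \<in> kXl X k' l'"
  shows "bond X (k, l) C \<in> kXl X k l"
proof -
  obtain x where "x \<in> X" "C = kcls X k' l' x" using assms(5) by (auto simp: kXl_def)
  then show ?thesis using bond_kcls assms by (simp add: kXl_def)
qed

lemma Xtil_closed: "closedin (cover_prod_top X) (Xtil X)"
proof -
  let ?T = "cover_prod_top X"
  define J where "J = {((k, l), (k', l')). k \<le> k' \<and> l - k \<le> l' - k' \<and> k \<le> l \<and> k' \<le> (l' :: nat)}"
  define E where "E = (\<lambda>((k, l), (k', l')). {t \<in> topspace ?T. t (k, l) = bond X (k, l) (t (k', l'))})"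
  have top: "topspace ?T = (\<Pi>\<^sub>E p\<in>Idx. kXl X (fst p) (snd p))"
    by (simp add: cover_prod_top_def)
  have "Xtil X = \<Inter> (E ` J)"
  proof
    show "Xtil X \<subseteq> \<Inter> (E ` J)"
      unfolding E_def J_def using Xtil_PiE Xtil_bond top by fastforce
    show "\<Inter> (E ` J) \<subseteq> Xtil X"
    proof
      fix t assume t: "t \<in> \<Inter> (E ` J)"
      have "((0, 0), (0, 0)) \<in> J" by (simp add: J_def)
      then have "t \<in> topspace ?T" using t by (auto simp: E_def)
      moreover have "t p = bond X p (t q)" if "p \<in> Idx" "q \<in> Idx" "idx_le p q" for p q
      proof -
        obtain k l k' l' where pq: "p = (k, l)" "q = (k', l')" by fastforce
        then have "((k, l), (k', l')) \<in> J" using that by (simp add: J_def)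
        then show ?thesis using t pq by (auto simp: E_def)
      qed
      ultimately show "t \<in> Xtil X" unfolding Xtil_def top by blast
    qed
  qed
  moreover have "closedin ?T (E j)" if "j \<in> J" for j
  proof -
    obtain k l k' l' where j: "j = ((k, l), (k', l'))" by (metis prod.collapse)
    then have h: "k \<le> k'" "l - k \<le> l' - k'" "k \<le> l" "k' \<le> l'" using that by (auto simp: J_def)
    have c1: "continuous_map ?T (discrete_topology (kXl X k l)) (\<lambda>t. t (k, l))"
      unfolding cover_prod_top_def
      using continuous_map_product_projection[of "(k, l)" Idx "\<lambda>p. discrete_topology (kXl X (fst p) (snd p))"] h by simp
    have c2': "continuous_map ?T (discrete_topology (kXl X k' l')) (\<lambda>t. t (k', l'))"
      unfolding cover_prod_top_def
      using continuous_map_product_projection[of "(k', l')" Idx "\<lambda>p. discrete_topology (kXl X (fst p) (snd p))"] h by simp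
    have cb: "continuous_map (discrete_topology (kXl X k' l')) (discrete_topology (kXl X k l)) (bond X (k, l))"
      using bond_into[OF h] by auto
    have c2: "continuous_map ?T (discrete_topology (kXl X k l)) (\<lambda>t. bond X (k, l) (t (k', l')))"
      using continuous_map_compose[OF c2' cb] by (simp add: o_def)
    show ?thesis using closedin_continuous_maps_eq[OF Hausdorff_space_discrete_topology c1 c2] j by (simp add: E_def)
  qed
  moreover have "J \<noteq> {}" by (auto simp: J_def)
  ultimately show ?thesis by (metis (no_types, lifting) closedin_Inter imageE image_is_empty)
qed

lemma compact_Xtil: "compact_space (Xtil_top X)"
proof -
  have "compact_space (cover_prod_top X)"
    unfolding cover_prod_top_def compact_space_product_topology
    by (simp add: compact_space_discrete_topology kXl_finite)
  then show ?thesis unfolding Xtil_top_def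
    using closedin_compact_space[OF _ Xtil_closed] compact_space_subtopology by blast
qed

lemma metrizable_Xtil: "metrizable_space (Xtil_top X)"
proof -
  have "countable {i \<in> Idx. \<not> (\<exists>a. topspace (discrete_topology (kXl X (fst i) (snd i))) \<subseteq> {a})}"
    by (rule countable_subset[OF subset_UNIV countableI_type])
  then have "metrizable_space (cover_prod_top X)"
    unfolding cover_prod_top_def metrizable_space_product_topology by simp
  then show ?thesis unfolding Xtil_top_def by (rule metrizable_space_subtopology)
qed

lemma Hausdorff_Xtil: "Hausdorff_space (Xtil_top X)"
  using metrizable_Xtil by (rule metrizable_imp_Hausdorff_space)

lemma dim_Xtil: "(Xtil_top X) dim_le 0"
proof -
  have "(cover_prod_top X) dim_le 0"
    unfolding dimension_le_0_neighbourhood_base_of_clopen neighbourhood_base_of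
  proof (intro allI impI)
    fix W x assume h: "openin (cover_prod_top X) W \<and> x \<in> W"
    then obtain U where U: "finite {i \<in> Idx. U i \<noteq> topspace (discrete_topology (kXl X (fst i) (snd i)))}"
      "\<forall>i\<in>Idx. openin (discrete_topology (kXl X (fst i) (snd i))) (U i)" "x \<in> Pi\<^sub>E Idx U" "Pi\<^sub>E Idx U \<subseteq> W"
      unfolding cover_prod_top_def openin_product_topology_alt by blast
    have o: "openin (cover_prod_top X) (Pi\<^sub>E Idx U)"
      unfolding cover_prod_top_def openin_product_topology_alt using U(1,2) by blast
    have c: "closedin (cover_prod_top X) (Pi\<^sub>E Idx U)"
      unfolding cover_prod_top_def closedin_product_topology using U(2) by simp
    show "\<exists>U V. openin (cover_prod_top X) U \<and> (closedin (cover_prod_top X) V \<and> openin (cover_prod_top X) V) \<and> x \<in> U \<and> U \<subseteq> V \<and> V \<subseteq> W"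
      using o c U(3,4) by blast
  qed
  then show ?thesis unfolding Xtil_top_def by (rule dimension_le_subtopology)
qed

lemma shift_til_cont: "continuous_map (Xtil_top X) (Xtil_top X) (shift_til X)"
proof -
  have comp: "continuous_map (Xtil_top X) (discrete_topology (kXl X k l)) (\<lambda>t. shift_til X t (k, l))"
    if kl: "k \<le> l" for k l
  proof -
    define g where "g = (\<lambda>C. kcls X k l (shift (SOME z. z \<in> C)))"
    have "g \<in> kXl X (Suc k) (Suc l) \<rightarrow> kXl X k l"
    proof
      fix C assume "C \<in> kXl X (Suc k) (Suc l)"
      then obtain x where x: "x \<in> X" "C = kcls X (Suc k) (Suc l) x" by (auto simp: kXl_def)
      then have "(SOME z. z \<in> C) \<in> C" unfolding some_in_eq using kcls_self by blast
      then have "(SOME z. z \<in> C) \<in> X" using x by (simp add: in_kcls)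
      then show "g C \<in> kXl X k l" unfolding g_def kXl_def using shift_in by blast
    qed
    then have cg: "continuous_map (discrete_topology (kXl X (Suc k) (Suc l))) (discrete_topology (kXl X k l)) g"
      by simp
    have "Suc k \<le> Suc l" using kl by simp
    then have "continuous_map (Xtil_top X) (discrete_topology (kXl X k l)) (g \<circ> (\<lambda>t. t (Suc k, Suc l)))"
      using continuous_map_compose[OF proj_cont cg] by simp
    then show ?thesis
      by (rule continuous_map_eq) (use kl in \<open>simp add: g_def shift_til_def\<close>)
  qed
  have "continuous_map (Xtil_top X) (cover_prod_top X) (shift_til X)"
    unfolding cover_prod_top_def continuous_map_componentwise
  proof
    show "shift_til X ` topspace (Xtil_top X) \<subseteq> extensional Idx"
      by (auto simp: shift_til_def)
    show "\<forall>p\<in>Idx. continuous_map (Xtil_top X) (discrete_topology (kXl X (fst p) (snd p))) (\<lambda>t. shift_til X t p)"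
      using comp by (auto simp: Idx_def)
  qed
  moreover have "shift_til X ` topspace (Xtil_top X) \<subseteq> Xtil X"
    using topspace_Xtil shift_til_in by auto
  ultimately show ?thesis unfolding Xtil_top_def[of X] by (simp add: continuous_map_in_subtopology Xtil_top_def image_subset_iff_funcset)
qed

lemma single_open:
  assumes t: "t \<in> Xtil X" and e: "t (N, Suc N) = {x}"
  shows "openin (Xtil_top X) {t}"
proof -
  have "{s \<in> Xtil X. s (N, Suc N) = {x}} = {t}"
  proof (intro equalityI subsetI)
    fix s assume "s \<in> {s \<in> Xtil X. s (N, Suc N) = {x}}"
    then have "s \<in> Xtil X" "s (N, Suc N) = {x}" by auto
    then have "t = s" using single_eq[OF t _ e] by blast
    then show "s \<in> {t}" by simp
  next
    fix s assume "s \<in> {t}"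
    then show "s \<in> {s \<in> Xtil X. s (N, Suc N) = {x}}" using t e by simp
  qed
  then show ?thesis using cyl_open[of N "Suc N" "\<lambda>C. C = {x}"] by simp
qed

lemma V_open:
  assumes fin: "finite (Sp_l X shift)"
  shows "openin (Xtil_top X) {t \<in> Xtil X. valid X t a}"
proof (subst openin_subopen, intro ballI)
  fix t assume "t \<in> {t \<in> Xtil X. valid X t a}"
  then have t: "t \<in> Xtil X" and va: "valid X t a" by auto
  show "\<exists>T. openin (Xtil_top X) T \<and> t \<in> T \<and> T \<subseteq> {t \<in> Xtil X. valid X t a}"
  proof (cases "\<exists>b. b \<noteq> a \<and> valid X t b")
    case True
    then obtain b where "b \<noteq> a" "valid X t b" by blast
    then obtain N x where "t (N, Suc N) = {x}" using twovalid_single[OF fin t va] by metis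
    then have "openin (Xtil_top X) {t}" using single_open t by blast
    then show ?thesis using t va by blast
  next
    case False
    then have "\<forall>b. b \<noteq> a \<longrightarrow> (\<exists>k. b \<notin> Aset X t k)" by (auto simp: valid_def)
    then obtain Kf where Kf: "\<And>b. b \<noteq> a \<Longrightarrow> b \<notin> Aset X t (Kf b)" by metis
    define K where "K = Max (range Kf)"
    have nb: "b \<notin> Aset X t K" if "b \<noteq> a" for b
    proof -
      have "Kf b \<le> K" unfolding K_def by simp
      then show ?thesis using Kf[OF that] Aset_antimono[OF t] by blast
    qed
    define T where "T = {s \<in> Xtil X. s (K, Suc K) = t (K, Suc K)}"
    have "openin (Xtil_top X) T" unfolding T_def by (rule cyl_open) simp
    moreover have "T \<subseteq> {t \<in> Xtil X. valid X t a}"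
    proof
      fix s assume "s \<in> T"
      then have s: "s \<in> Xtil X" "s (K, Suc K) = t (K, Suc K)" by (auto simp: T_def)
      obtain c where c: "valid X s c" using valid_ex[OF s(1)] by blast
      then have "c \<in> Aset X s K" by (simp add: valid_def)
      then have "c \<in> Aset X t K" using s(2) by (simp add: Aset_def)
      then have "c = a" using nb by blast
      then show "s \<in> {t \<in> Xtil X. valid X t a}" using s c by simp
    qed
    moreover have "t \<in> T" using t by (simp add: T_def)
    ultimately show ?thesis by blast
  qed
qed

lemma local_homeo:
  assumes fin: "finite (Sp_l X shift)"
  shows "local_homeomorphism (Xtil_top X) (shift_til X)"
  unfolding local_homeomorphism_def
proof
  fix s assume "s \<in> topspace (Xtil_top X)"
  then have s: "s \<in> Xtil X" by (simp add: topspace_Xtil)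
  define a where "a = letter s"
  define U where "U = {s' \<in> Xtil X. letter s' = a}"
  have Ueq: "U = {s' \<in> Xtil X. (\<lambda>C. (SOME w. w \<in> C) 0 = a) (s' (1, 1))}"
    unfolding U_def letter_def by simp
  have Uo: "openin (Xtil_top X) U" unfolding Ueq by (rule cyl_open) simp
  have Uc: "closedin (Xtil_top X) U" unfolding Ueq by (rule cyl_closed) simp
  have sU: "s \<in> U" using s by (simp add: U_def a_def)
  have img: "shift_til X ` U = {t \<in> Xtil X. valid X t a}"
  proof
    show "shift_til X ` U \<subseteq> {t \<in> Xtil X. valid X t a}"
      using preimage_valid shift_til_in by (auto simp: U_def)
    show "{t \<in> Xtil X. valid X t a} \<subseteq> shift_til X ` U"
    proof
      fix t assume "t \<in> {t \<in> Xtil X. valid X t a}"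
      then have t: "t \<in> Xtil X" "valid X t a" by auto
      have "pre X a t \<in> U" using pre_in[OF t] letter_pre[OF t] by (simp add: U_def)
      then show "t \<in> shift_til X ` U" using shift_pre[OF t] by (metis imageI)
    qed
  qed
  have Vo: "openin (Xtil_top X) (shift_til X ` U)" using img V_open[OF fin] by simp
  have tU: "topspace (subtopology (Xtil_top X) U) = U"
    using openin_subset[OF Uo] by (simp add: Int_absorb1)
  have tV: "topspace (subtopology (Xtil_top X) (shift_til X ` U)) = shift_til X ` U"
    using openin_subset[OF Vo] by (simp add: Int_absorb1)
  have cont: "continuous_map (subtopology (Xtil_top X) U) (subtopology (Xtil_top X) (shift_til X ` U)) (shift_til X)"
    by (simp add: continuous_map_in_subtopology continuous_map_from_subtopology shift_til_cont tU)
  have comp: "compact_space (subtopology (Xtil_top X) U)"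
    using closedin_compact_space[OF compact_Xtil Uc] compact_space_subtopology by blast
  have haus: "Hausdorff_space (subtopology (Xtil_top X) (shift_til X ` U))"
    using Hausdorff_Xtil Hausdorff_space_subtopology by blast
  have inj: "inj_on (shift_til X) U"
    by (rule inj_onI) (use preimage_unique in \<open>auto simp: U_def\<close>)
  have "homeomorphic_map (subtopology (Xtil_top X) U) (subtopology (Xtil_top X) (shift_til X ` U)) (shift_til X)"
    using bijective_closed_imp_homeomorphic_map[OF cont continuous_imp_closed_map[OF cont comp haus]] tU tV inj by simp
  then show "\<exists>U. openin (Xtil_top X) U \<and> s \<in> U \<and> openin (Xtil_top X) (shift_til X ` U) \<and>
        homeomorphic_map (subtopology (Xtil_top X) U) (subtopology (Xtil_top X) (shift_til X ` U)) (shift_til X)"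
    using Uo sU Vo by blast
qed

lemma isolated_Sp:
  assumes fin: "finite (Sp_l X shift)" and t: "t \<in> Sp_l (Xtil X) (shift_til X)"
  shows "isolated_point (Xtil_top X) t"
proof -
  have tX: "t \<in> Xtil X" using t by (simp add: Sp_l_def)
  obtain N x where "t (N, Suc N) = {x}" using Sp_til_char[OF fin t] by blast
  then show ?thesis unfolding isolated_point_def using single_open[OF tX] tX topspace_Xtil by auto
qed

end

theorem theorem3p5:
  fixes X :: "(nat \<Rightarrow> 'a::finite) set"
  assumes "subshift X"
    and "shift ` X = X"
    and "aperiodic_on X shift"
    and "finite (Sp_l X shift)"
  shows "topspace (Xtil_top X) = Xtil X
    \<and> compact_space (Xtil_top X) \<and> metrizable_space (Xtil_top X) \<and> (Xtil_top X) dim_le 0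
    \<and> continuous_map (Xtil_top X) (Xtil_top X) (shift_til X)
    \<and> shift_til X ` Xtil X = Xtil X
    \<and> aperiodic_on (Xtil X) (shift_til X)
    \<and> local_homeomorphism (Xtil_top X) (shift_til X)
    \<and> finite (Sp_l (Xtil X) (shift_til X))
    \<and> card (Sp_l (Xtil X) (shift_til X)) = card (Sp_l X shift)
    \<and> (\<forall>t\<in>Sp_l (Xtil X) (shift_til X). isolated_point (Xtil_top X) t)"
proof -
  interpret SS X
    using assms(1,2) by unfold_locales (simp_all add: subshift_def)
  show ?thesis
    using topspace_Xtil compact_Xtil metrizable_Xtil dim_Xtil shift_til_cont shift_til_surj
      aperiodic_til[OF assms(3)] local_homeo[OF assms(4)] Sp_til_card[OF assms(4)] isolated_Sp[OF assms(4)]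
    by blast
qed

end
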